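(* Let $G=(V,E,L)$ be a hypergraph with loops. Then the set of extreme points of $\mathrm{PP}(G)$ is $$\mathcal{Q}=\Big\{z\in\mathbb{R}^{V\cup E\cup L}: z_i\in[0,1]\ \forall i\in V \text{ with }\{i,i\}\in L^+,\ z_i\in\{0,1\}\ \forall i\in V\text{ with }\{i,i\}\notin L^+,\ z_e=\prod_{k\in e}z_k\ \forall e\in E,\ z_{ii}=z_i^2\ \forall\{i,i\}\in L\Big\}.$$
   Context: A hypergraph with loops is $G=(V,E,L)$: $V$ a finite node set, $E$ a set of subsets of $V$ of cardinality at least two, $L$ a set of loops $\{i,i\}$, $i\in V$, partitioned as $L=L^-\cup L^+$ (minus/plus loops). $\mathrm{PP}(G):=\mathrm{conv}\{z\in\mathbb{R}^{V\cup E\cup L}: z_{ii}\ge z_i^2\ \forall\{i,i\}\in L^+,\ z_{ii}\le z_i^2\ \forall \{i,i\}\in L^-,\ z_e=\prod_{i\in e}z_i\ \forall e\in E,\ z_i\in[0,1]\ \forall i\in V\}$. *)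

theory Defs
  imports "HOL-Analysis.Analysis"
begin

text \<open>Coordinate index set for R^(V \<union> E \<union> L): nodes i, hyperedges e, loops {i,i}
  (a loop {i,i} is identified by its node i).\<close>
datatype 'v idx = Node 'v | Edge "'v set" | Loop 'v

instance idx :: (finite) finite
proof
  have "(UNIV :: 'a idx set) = range Node \<union> range Edge \<union> range Loop"
    by (auto, metis idx.exhaust rangeI)
  then show "finite (UNIV :: 'a idx set)" by (metis finite_Un finite_imageI finite)
qed

text \<open>Hypergraph with loops G = (V, E, L), L = Lminus \<union> Lplus (disjoint).\<close>
definition hypergraph_loops :: "'v set \<Rightarrow> 'v set set \<Rightarrow> 'v set \<Rightarrow> 'v set \<Rightarrow> bool" where
  "hypergraph_loops V E Lm Lp \<longleftrightarrow> finite V \<and> (\<forall>e\<in>E. e \<subseteq> V \<and> card e \<ge> 2)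
     \<and> Lm \<subseteq> V \<and> Lp \<subseteq> V \<and> Lm \<inter> Lp = {}"

definition supported :: "'v set \<Rightarrow> 'v set set \<Rightarrow> 'v set \<Rightarrow> 'v set \<Rightarrow> real ^ ('v::finite) idx \<Rightarrow> bool" where
  "supported V E Lm Lp z \<longleftrightarrow>
     (\<forall>i. i \<notin> V \<longrightarrow> z $ Node i = 0) \<and> (\<forall>e. e \<notin> E \<longrightarrow> z $ Edge e = 0)
     \<and> (\<forall>i. i \<notin> Lm \<union> Lp \<longrightarrow> z $ Loop i = 0)"

definition PP_set :: "'v set \<Rightarrow> 'v set set \<Rightarrow> 'v set \<Rightarrow> 'v set \<Rightarrow> (real ^ ('v::finite) idx) set" where
  "PP_set V E Lm Lp = {z. supported V E Lm Lp z
      \<and> (\<forall>i\<in>Lp. z $ Loop i \<ge> (z $ Node i)^2)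
      \<and> (\<forall>i\<in>Lm. z $ Loop i \<le> (z $ Node i)^2)
      \<and> (\<forall>e\<in>E. z $ Edge e = (\<Prod>k\<in>e. z $ Node k))
      \<and> (\<forall>i\<in>V. 0 \<le> z $ Node i \<and> z $ Node i \<le> 1)}"

definition PP :: "'v set \<Rightarrow> 'v set set \<Rightarrow> 'v set \<Rightarrow> 'v set \<Rightarrow> (real ^ ('v::finite) idx) set" where
  "PP V E Lm Lp = convex hull (PP_set V E Lm Lp)"

definition Q_set :: "'v set \<Rightarrow> 'v set set \<Rightarrow> 'v set \<Rightarrow> 'v set \<Rightarrow> (real ^ ('v::finite) idx) set" where
  "Q_set V E Lm Lp = {z. supported V E Lm Lp z
      \<and> (\<forall>i\<in>V. i \<in> Lp \<longrightarrow> 0 \<le> z $ Node i \<and> z $ Node i \<le> 1)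
      \<and> (\<forall>i\<in>V. i \<notin> Lp \<longrightarrow> z $ Node i \<in> {0, 1})
      \<and> (\<forall>e\<in>E. z $ Edge e = (\<Prod>k\<in>e. z $ Node k))
      \<and> (\<forall>i\<in>Lm \<union> Lp. z $ Loop i = (z $ Node i)^2)}"

end

theory Submission imports Defs begin

definition alpha :: "real ^ ('v::finite) idx \<Rightarrow> 'v set \<Rightarrow> 'v set \<Rightarrow> 'v \<Rightarrow> real" where
  "alpha z Lm Lp i = (if i \<in> Lp then -2 * z $ Node i else if z $ Node i = 0 then (if i \<in> Lm then 2 else 1) else -1)"
definition beta :: "'v set \<Rightarrow> 'v set \<Rightarrow> 'v \<Rightarrow> real" where
  "beta Lm Lp i = (if i \<in> Lp then 1 else if i \<in> Lm then -1 else 0)"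
definition ell :: "real ^ ('v::finite) idx \<Rightarrow> 'v set \<Rightarrow> 'v set \<Rightarrow> 'v set \<Rightarrow> real ^ 'v idx \<Rightarrow> real" where
  "ell z V Lm Lp x = (\<Sum>i\<in>V. alpha z Lm Lp i * x $ Node i + beta Lm Lp i * x $ Loop i)"

lemma key:
  assumes H: "hypergraph_loops V E Lm Lp" and z: "z \<in> Q_set V E Lm Lp" and s: "s \<in> PP_set V E Lm Lp"
    and i: "i \<in> V"
  shows "alpha z Lm Lp i * z $ Node i + beta Lm Lp i * z $ Loop i \<le> alpha z Lm Lp i * s $ Node i + beta Lm Lp i * s $ Loop i
    \<and> (alpha z Lm Lp i * s $ Node i + beta Lm Lp i * s $ Loop i = alpha z Lm Lp i * z $ Node i + beta Lm Lp i * z $ Loop i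
       \<longrightarrow> s $ Node i = z $ Node i \<and> (i \<in> Lm \<union> Lp \<longrightarrow> s $ Loop i = z $ Loop i))"
proof -
  have disj: "Lm \<inter> Lp = {}" using H by (simp add: hypergraph_loops_def)
  define a where "a = s $ Node i"
  define b where "b = s $ Loop i"
  define c where "c = z $ Node i"
  define d where "d = z $ Loop i"
  have a01: "0 \<le> a" "a \<le> 1" using s i by (auto simp: PP_set_def a_def)
  show ?thesis
  proof (cases "i \<in> Lp")
    case True
    then have "i \<notin> Lm" using disj by auto
    have b: "b \<ge> a^2" using s True by (auto simp: PP_set_def a_def b_def)
    have d: "d = c^2" using z True by (auto simp: Q_set_def c_def d_def)
    have sq: "(a - c)^2 \<le> b - 2*c*a + c^2" using b by (simp add: power2_eq_square algebra_simps)
    have "0 \<le> (a - c)^2" by simp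
    moreover have "b - 2*c*a + c^2 = 0 \<Longrightarrow> a = c \<and> b = d"
    proof -
      assume h: "b - 2*c*a + c^2 = 0"
      then have "(a-c)^2 = 0" using sq \<open>0 \<le> (a - c)^2\<close> by linarith
      then have "a = c" by simp
      then show ?thesis using h d by (simp add: power2_eq_square)
    qed
    moreover have ge: "a*(c*2) \<le> b + c*c" using sq \<open>0 \<le> (a - c)^2\<close> by (simp add: power2_eq_square algebra_simps)
    ultimately show ?thesis using True sq d
      by (simp add: alpha_def beta_def a_def[symmetric] b_def[symmetric] c_def[symmetric] d_def[symmetric]) 
         (auto simp: power2_eq_square algebra_simps)
  next
    case False
    have c01: "c = 0 \<or> c = 1" using z i False by (auto simp: Q_set_def c_def)
    show ?thesis
    proof (cases "i \<in> Lm")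
      case True
      have b: "b \<le> a^2" using s True by (auto simp: PP_set_def a_def b_def)
      have d: "d = c^2" using z True by (auto simp: Q_set_def c_def d_def)
      have aa: "a^2 \<le> a" using a01 by (simp add: power2_eq_square mult_left_le)
      show ?thesis using c01
      proof
        assume c0: "c = 0"
        then show ?thesis using True False b d aa a01
          by (simp add: alpha_def beta_def a_def[symmetric] b_def[symmetric] c_def[symmetric] d_def[symmetric];
             smt (verit) power2_eq_square mult_nonneg_nonneg)
      next
        assume c1: "c = 1"
        then show ?thesis using True False b d aa a01
          by (simp add: alpha_def beta_def a_def[symmetric] b_def[symmetric] c_def[symmetric] d_def[symmetric];
             smt (verit) power2_eq_square mult_nonneg_nonneg)
      qed
    next
      case F2: False
      show ?thesis using c01 a01 False F2
        by (auto simp: alpha_def beta_def a_def[symmetric] c_def[symmetric])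
    qed
  qed
qed

lemma ell_ge:
  assumes H: "hypergraph_loops V E Lm Lp" and z: "z \<in> Q_set V E Lm Lp" and s: "s \<in> PP_set V E Lm Lp"
  shows "ell z V Lm Lp z \<le> ell z V Lm Lp s \<and> (ell z V Lm Lp s = ell z V Lm Lp z \<longrightarrow> s = z)"
proof -
  let ?f = "\<lambda>x i. alpha z Lm Lp i * x $ Node i + beta Lm Lp i * x $ Loop i"
  have fin: "finite V" using H by (simp add: hypergraph_loops_def)
  have K: "\<And>i. i \<in> V \<Longrightarrow> ?f z i \<le> ?f s i \<and> (?f s i = ?f z i \<longrightarrow> s $ Node i = z $ Node i \<and> (i \<in> Lm \<union> Lp \<longrightarrow> s $ Loop i = z $ Loop i))"
    using key[OF H z s] by blast
  have ge: "ell z V Lm Lp z \<le> ell z V Lm Lp s" unfolding ell_def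
    by (rule sum_mono) (use K in blast)
  moreover have "s = z" if eq: "ell z V Lm Lp s = ell z V Lm Lp z"
  proof -
    have "(\<Sum>i\<in>V. ?f s i - ?f z i) = 0" using eq unfolding ell_def by (simp add: sum_subtractf)
    then have "\<forall>i\<in>V. ?f s i - ?f z i = 0"
      using sum_nonneg_eq_0_iff[OF fin, of "\<lambda>i. ?f s i - ?f z i"] K by auto
    then have N: "\<And>i. i \<in> V \<Longrightarrow> s $ Node i = z $ Node i \<and> (i \<in> Lm \<union> Lp \<longrightarrow> s $ Loop i = z $ Loop i)"
      using K by auto
    have ss: "supported V E Lm Lp s" using s by (simp add: PP_set_def)
    have zs: "supported V E Lm Lp z" using z by (simp add: Q_set_def)
    have sE: "\<forall>e\<in>E. s $ Edge e = (\<Prod>k\<in>e. s $ Node k)" using s by (simp add: PP_set_def)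
    have zE: "\<forall>e\<in>E. z $ Edge e = (\<Prod>k\<in>e. z $ Node k)" using z by (simp add: Q_set_def)
    have EV: "\<forall>e\<in>E. e \<subseteq> V" and LV: "Lm \<subseteq> V" "Lp \<subseteq> V" using H by (auto simp: hypergraph_loops_def)
    show "s = z"
    proof (subst vec_eq_iff, intro allI)
      fix j show "s $ j = z $ j"
      proof (cases j)
        case (Node i) then show ?thesis using N ss zs unfolding supported_def by (cases "i \<in> V") auto
      next
        case (Edge e)
        show ?thesis
        proof (cases "e \<in> E")
          case True
          then have "(\<Prod>k\<in>e. s $ Node k) = (\<Prod>k\<in>e. z $ Node k)"
            using EV N by (intro prod.cong) auto
          then show ?thesis using True sE zE Edge by simp
        next
          case False then show ?thesis using ss zs Edge unfolding supported_def by auto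
        qed
      next
        case (Loop i) then show ?thesis using N ss zs LV unfolding supported_def by (cases "i \<in> Lm \<union> Lp") auto
      qed
    qed
  qed
  ultimately show ?thesis by blast
qed

lemma ell_comb: "ell z V Lm Lp ((1 - u) *\<^sub>R a + u *\<^sub>R b) = (1 - u) * ell z V Lm Lp a + u * ell z V Lm Lp b"
proof -
  have "\<And>i. alpha z Lm Lp i * ((1 - u) *\<^sub>R a + u *\<^sub>R b) $ Node i + beta Lm Lp i * ((1 - u) *\<^sub>R a + u *\<^sub>R b) $ Loop i
     = (1 - u) * (alpha z Lm Lp i * a $ Node i + beta Lm Lp i * a $ Loop i) + u * (alpha z Lm Lp i * b $ Node i + beta Lm Lp i * b $ Loop i)"
    by (simp add: algebra_simps)
  then show ?thesis unfolding ell_def sum_distrib_left by (simp only: sum.distrib)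
qed

lemma Q_sub:
  assumes H: "hypergraph_loops V E Lm Lp" and z: "z \<in> Q_set V E Lm Lp"
  shows "z extreme_point_of PP V E Lm Lp"
proof -
  let ?l = "ell z V Lm Lp"
  define T where "T = {x. ?l z \<le> ?l x \<and> (?l x = ?l z \<longrightarrow> x = z)}"
  have zS: "z \<in> PP_set V E Lm Lp"
  proof -
    have "\<forall>i\<in>V. 0 \<le> z $ Node i \<and> z $ Node i \<le> 1" using z by (auto simp: Q_set_def)
    moreover have "\<forall>i\<in>Lp. z $ Loop i \<ge> (z $ Node i)^2" "\<forall>i\<in>Lm. z $ Loop i \<le> (z $ Node i)^2"
      using z by (auto simp: Q_set_def)
    ultimately show ?thesis using z by (simp add: Q_set_def PP_set_def)
  qed
  have ST: "PP_set V E Lm Lp \<subseteq> T"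
  proof
    fix x assume "x \<in> PP_set V E Lm Lp"
    then show "x \<in> T" using ell_ge[OF H z, of x] by (simp add: T_def)
  qed
  have cT: "convex T"
    unfolding convex_alt
  proof (intro ballI allI impI)
    fix x y and u :: real assume x: "x \<in> T" and y: "y \<in> T" and u: "0 \<le> u \<and> u \<le> 1"
    have c: "?l ((1 - u) *\<^sub>R x + u *\<^sub>R y) = (1 - u) * ?l x + u * ?l y" by (rule ell_comb)
    have lx: "?l z \<le> ?l x" and ly: "?l z \<le> ?l y" using x y unfolding T_def mem_Collect_eq by blast+
    have "(1 - u) * ?l z \<le> (1 - u) * ?l x" using lx u by (intro mult_left_mono) auto
    moreover have "u * ?l z \<le> u * ?l y" using ly u by (intro mult_left_mono) auto
    moreover have "?l z = (1 - u) * ?l z + u * ?l z" by (simp add: algebra_simps)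
    ultimately have ge: "?l z \<le> ?l ((1 - u) *\<^sub>R x + u *\<^sub>R y)" unfolding c by linarith
    moreover have "(1 - u) *\<^sub>R x + u *\<^sub>R y = z" if eq: "?l ((1 - u) *\<^sub>R x + u *\<^sub>R y) = ?l z"
    proof (cases "u = 0 \<or> u = 1")
      case True
      then have "(1 - u) *\<^sub>R x + u *\<^sub>R y = x \<or> (1 - u) *\<^sub>R x + u *\<^sub>R y = y" by auto
      then show ?thesis using x y eq unfolding T_def mem_Collect_eq by metis
    next
      case False
      then have u': "0 < u" "u < 1" using u by auto
      have "(1 - u) * (?l x - ?l z) + u * (?l y - ?l z) = 0" using eq c by (simp add: algebra_simps)
      moreover have "0 \<le> (1 - u) * (?l x - ?l z)" "0 \<le> u * (?l y - ?l z)" using lx ly u by (auto intro!: mult_nonneg_nonneg)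
      ultimately have "(1 - u) * (?l x - ?l z) = 0" "u * (?l y - ?l z) = 0" by linarith+
      then have "?l x = ?l z" "?l y = ?l z" using u' by auto
      then have "x = z" "y = z" using x y unfolding T_def mem_Collect_eq by blast+
      then show ?thesis by (simp add: scaleR_left_diff_distrib)
    qed
    ultimately show "(1 - u) *\<^sub>R x + u *\<^sub>R y \<in> T" unfolding T_def by blast
  qed
  have PT: "PP V E Lm Lp \<subseteq> T" unfolding PP_def by (rule hull_minimal[where S=convex, OF ST cT])
  show ?thesis unfolding extreme_point_of_def
  proof (intro conjI ballI)
    show "z \<in> PP V E Lm Lp" unfolding PP_def by (rule hull_inc[OF zS])
  next
    fix a b assume a: "a \<in> PP V E Lm Lp" and b: "b \<in> PP V E Lm Lp"
    show "z \<notin> open_segment a b"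
    proof
      assume "z \<in> open_segment a b"
      then obtain u where ab: "a \<noteq> b" and u: "0 < u" "u < 1" and zu: "z = (1 - u) *\<^sub>R a + u *\<^sub>R b"
        by (auto simp: in_segment)
      have aT: "a \<in> T" and bT: "b \<in> T" using a b PT by auto
      have lx: "?l z \<le> ?l a" and ly: "?l z \<le> ?l b" using aT bT unfolding T_def mem_Collect_eq by blast+
      have c0: "?l ((1 - u) *\<^sub>R a + u *\<^sub>R b) = (1 - u) * ?l a + u * ?l b" by (rule ell_comb)
      have c: "?l z = (1 - u) * ?l a + u * ?l b" using c0 by (simp only: zu[symmetric])
      have "(1 - u) * (?l a - ?l z) + u * (?l b - ?l z) = 0" using c by (simp add: algebra_simps)
      moreover have "0 \<le> (1 - u) * (?l a - ?l z)" "0 \<le> u * (?l b - ?l z)" using lx ly u by (auto intro!: mult_nonneg_nonneg)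
      ultimately have "(1 - u) * (?l a - ?l z) = 0" "u * (?l b - ?l z) = 0" by linarith+
      then have "?l a = ?l z" "?l b = ?l z" using u by auto
      then have "a = z" "b = z" using aT bT unfolding T_def mem_Collect_eq by blast+
      then show False using ab by simp
    qed
  qed
qed

lemma not_ext:
  assumes ext: "z extreme_point_of PP V E Lm Lp" and a: "a \<in> PP_set V E Lm Lp" and b: "b \<in> PP_set V E Lm Lp"
    and ab: "a \<noteq> b" and u: "0 < u" "u < 1" and zu: "z = (1 - u) *\<^sub>R a + u *\<^sub>R b"
  shows False
proof -
  have "a \<in> PP V E Lm Lp" "b \<in> PP V E Lm Lp" unfolding PP_def using a b by (auto intro: hull_inc)
  moreover have "z \<in> open_segment a b" using ab u zu by (auto simp: in_segment)
  ultimately show False using ext unfolding extreme_point_of_def by blast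
qed

lemma loop_eq:
  assumes H: "hypergraph_loops V E Lm Lp" and ext: "z extreme_point_of PP V E Lm Lp"
    and i: "i \<in> Lm \<union> Lp"
  shows "z $ Loop i = (z $ Node i)^2"
proof (rule ccontr)
  assume ne: "z $ Loop i \<noteq> (z $ Node i)^2"
  have zS: "z \<in> PP_set V E Lm Lp" using ext unfolding PP_def by (rule extreme_point_of_convex_hull)
  have disj: "Lm \<inter> Lp = {}" using H by (simp add: hypergraph_loops_def)
  define d where "d = z $ Loop i - (z $ Node i)^2"
  define a where "a = (\<chi> k. if k = Loop i then (z $ Node i)^2 else z $ k)"
  define b where "b = (\<chi> k. if k = Loop i then z $ Loop i + d else z $ k)"
  have d0: "d \<noteq> 0" using ne by (simp add: d_def)
  have dp: "i \<in> Lp \<Longrightarrow> d \<ge> 0" using zS by (auto simp: PP_set_def d_def)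
  have dm: "i \<in> Lm \<Longrightarrow> d \<le> 0" using zS by (auto simp: PP_set_def d_def)
  have aS: "a \<in> PP_set V E Lm Lp" using zS i unfolding a_def PP_set_def supported_def by auto
  have bS: "b \<in> PP_set V E Lm Lp" using zS i dp dm disj unfolding b_def PP_set_def supported_def d_def
    by auto
  have ab: "a \<noteq> b"
  proof
    assume "a = b" then have "a $ Loop i = b $ Loop i" by simp
    then show False using d0 by (simp add: a_def b_def d_def)
  qed
  have zu: "z = (1 - 1/2) *\<^sub>R a + (1/2) *\<^sub>R b"
    by (simp add: vec_eq_iff a_def b_def d_def field_simps)
  show False using not_ext[OF ext aS bS ab _ _ zu] by simp
qed

lemma node01:
  assumes H: "hypergraph_loops V E Lm Lp" and ext: "z extreme_point_of PP V E Lm Lp"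
    and i: "i \<in> V" "i \<notin> Lp"
  shows "z $ Node i \<in> {0, 1}"
proof (rule ccontr)
  assume ne: "z $ Node i \<notin> {0, 1}"
  have zS: "z \<in> PP_set V E Lm Lp" using ext unfolding PP_def by (rule extreme_point_of_convex_hull)
  have fin: "finite V" and EV: "\<forall>e\<in>E. e \<subseteq> V" using H by (auto simp: hypergraph_loops_def)
  define t where "t = z $ Node i"
  have t: "0 < t" "t < 1" using ne zS i by (auto simp: PP_set_def t_def less_le)
  define la where "la = (if i \<in> Lm then (z $ Loop i - t) / (1 - t) else 0)"
  define lb where "lb = (if i \<in> Lm then 1 else (0::real))"
  define a where "a = (\<chi> k. case k of Node j \<Rightarrow> if j = i then 0 else z $ Node j
      | Edge e \<Rightarrow> if i \<in> e \<and> e \<in> E then 0 else z $ Edge e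
      | Loop j \<Rightarrow> if j = i then la else z $ Loop j)"
  define b where "b = (\<chi> k. case k of Node j \<Rightarrow> if j = i then 1 else z $ Node j
      | Edge e \<Rightarrow> if i \<in> e \<and> e \<in> E then (\<Prod>k\<in>e-{i}. z $ Node k) else z $ Edge e
      | Loop j \<Rightarrow> if j = i then lb else z $ Loop j)"
  have zsup: "supported V E Lm Lp z" and zLp: "\<forall>i\<in>Lp. z $ Loop i \<ge> (z $ Node i)^2"
    and zLm: "\<forall>i\<in>Lm. z $ Loop i \<le> (z $ Node i)^2"
    and zE: "\<forall>e\<in>E. z $ Edge e = (\<Prod>k\<in>e. z $ Node k)"
    and zV: "\<forall>i\<in>V. 0 \<le> z $ Node i \<and> z $ Node i \<le> 1" using zS by (auto simp: PP_set_def)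
  have loop0: "i \<notin> Lm \<Longrightarrow> z $ Loop i = 0" using zsup i by (simp add: supported_def)
  have tt: "t^2 \<le> t" using t by (simp add: power2_eq_square mult_left_le less_imp_le)
  have la0: "la \<le> 0"
  proof (cases "i \<in> Lm")
    case True
    then have "z $ Loop i \<le> t" using zLm tt by (force simp: t_def)
    then show ?thesis using True t by (simp add: la_def divide_nonpos_pos)
  qed (simp add: la_def)
  have aS: "a \<in> PP_set V E Lm Lp"
    unfolding PP_set_def mem_Collect_eq
  proof (intro conjI ballI)
    show "supported V E Lm Lp a" using zsup i unfolding supported_def a_def la_def by auto
    show "a $ Loop j \<ge> (a $ Node j)^2" if "j \<in> Lp" for j using that i zLp by (auto simp: a_def)
    show "a $ Loop j \<le> (a $ Node j)^2" if "j \<in> Lm" for j using that zLm la0 by (auto simp: a_def)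
    show "0 \<le> a $ Node j" "a $ Node j \<le> 1" if "j \<in> V" for j using that zV by (auto simp: a_def)
    show "a $ Edge e = (\<Prod>k\<in>e. a $ Node k)" if e: "e \<in> E" for e
    proof (cases "i \<in> e")
      case True
      have fe: "finite e" using e EV fin finite_subset by blast
      have "(\<Prod>k\<in>e. a $ Node k) = 0" using True fe by (intro prod_zero) (auto simp: a_def)
      then show ?thesis using True e by (simp add: a_def)
    next
      case False
      have "(\<Prod>k\<in>e. a $ Node k) = (\<Prod>k\<in>e. z $ Node k)" using False by (intro prod.cong) (auto simp: a_def)
      then show ?thesis using False e zE by (simp add: a_def)
    qed
  qed
  have bS: "b \<in> PP_set V E Lm Lp"
    unfolding PP_set_def mem_Collect_eq
  proof (intro conjI ballI)
    show "supported V E Lm Lp b" using zsup i unfolding supported_def b_def lb_def by auto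
    show "b $ Loop j \<ge> (b $ Node j)^2" if "j \<in> Lp" for j using that i zLp by (auto simp: b_def)
    show "b $ Loop j \<le> (b $ Node j)^2" if "j \<in> Lm" for j using that zLm by (auto simp: b_def lb_def)
    show "0 \<le> b $ Node j" "b $ Node j \<le> 1" if "j \<in> V" for j using that zV by (auto simp: b_def)
    show "b $ Edge e = (\<Prod>k\<in>e. b $ Node k)" if e: "e \<in> E" for e
    proof (cases "i \<in> e")
      case True
      have fe: "finite e" using e EV fin finite_subset by blast
      have "(\<Prod>k\<in>e. b $ Node k) = b $ Node i * (\<Prod>k\<in>e-{i}. b $ Node k)" using fe True by (rule prod.remove)
      also have "\<dots> = (\<Prod>k\<in>e-{i}. z $ Node k)" by (simp add: b_def)
      finally show ?thesis using True e by (simp add: b_def)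
    next
      case False
      have "(\<Prod>k\<in>e. b $ Node k) = (\<Prod>k\<in>e. z $ Node k)" using False by (intro prod.cong) (auto simp: b_def)
      then show ?thesis using False e zE by (simp add: b_def)
    qed
  qed
  have ab: "a \<noteq> b"
  proof
    assume "a = b" then have "a $ Node i = b $ Node i" by simp
    then show False by (simp add: a_def b_def)
  qed
  have zu: "z = (1 - t) *\<^sub>R a + t *\<^sub>R b"
  proof (subst vec_eq_iff, intro allI)
    fix k show "z $ k = ((1 - t) *\<^sub>R a + t *\<^sub>R b) $ k"
    proof (cases k)
      case (Node j) then show ?thesis by (simp add: a_def b_def t_def algebra_simps)
    next
      case (Edge e)
      show ?thesis
      proof (cases "i \<in> e \<and> e \<in> E")
        case True
        have fe: "finite e" using True EV fin finite_subset by blast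
        have "z $ Edge e = z $ Node i * (\<Prod>k\<in>e-{i}. z $ Node k)" using True zE prod.remove[OF fe, of i] by simp
        then show ?thesis using True Edge by (simp add: a_def b_def t_def)
      next
        case False then show ?thesis using Edge by (auto simp: a_def b_def algebra_simps)
      qed
    next
      case (Loop j)
      show ?thesis
      proof (cases "j = i")
        case True
        show ?thesis
        proof (cases "i \<in> Lm")
          case True
          have "(1 - t) * ((z $ Loop i - t) / (1 - t)) = z $ Loop i - t" using t by simp
          then show ?thesis using True \<open>j = i\<close> Loop by (simp add: a_def b_def la_def lb_def)
        next
          case False then show ?thesis using \<open>j = i\<close> Loop loop0 by (simp add: a_def b_def la_def lb_def)
        qed
      next
        case False then show ?thesis using Loop by (simp add: a_def b_def algebra_simps)
      qed
    qed
  qed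
  show False by (rule not_ext[OF ext aS bS ab t zu])
qed

theorem lemma2:
  fixes V :: "'v::finite set" and E :: "'v set set" and Lm Lp :: "'v set"
  assumes "hypergraph_loops V E Lm Lp"
  shows "{z. z extreme_point_of PP V E Lm Lp} = Q_set V E Lm Lp"
proof
  show "Q_set V E Lm Lp \<subseteq> {z. z extreme_point_of PP V E Lm Lp}" using Q_sub[OF assms] by blast
next
  show "{z. z extreme_point_of PP V E Lm Lp} \<subseteq> Q_set V E Lm Lp"
  proof
    fix z assume "z \<in> {z. z extreme_point_of PP V E Lm Lp}"
    then have ext: "z extreme_point_of PP V E Lm Lp" by simp
    have zS: "z \<in> PP_set V E Lm Lp" using ext unfolding PP_def by (rule extreme_point_of_convex_hull)
    have L: "\<forall>i\<in>Lm \<union> Lp. z $ Loop i = (z $ Node i)^2" using loop_eq[OF assms ext] by blast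
    have N: "\<forall>i\<in>V. i \<notin> Lp \<longrightarrow> z $ Node i \<in> {0, 1}" using node01[OF assms ext] by blast
    show "z \<in> Q_set V E Lm Lp" unfolding Q_set_def mem_Collect_eq
      using zS L N unfolding PP_set_def mem_Collect_eq by blast
  qed
qed

end
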